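(* Let $A\in\mathbb{R}^{m\times n}$ with $A\geq 0$ and $A^{\dagger}\geq 0$, and let $(U_k^{(i)},V_k^{(i)},E_k)_{k=1}^{p}$, $i=1,2$, be two proper weak regular multisplittings of $A$ (with the same weighting matrices $E_k$) such that $R(E_k)\subseteq R(A^{T})$ for each $k=1,\ldots,p$. If $[U_k^{(1)}]^{\dagger}\geq[U_k^{(2)}]^{\dagger}$ for each $k=1,\ldots,p$, then $\rho(H_1)\leq\rho(H_2)<1$, where $H_i=\sum_{k=1}^{p}E_k[U_k^{(i)}]^{\dagger}V_k^{(i)}$ for $i=1,2$.
   Context: $A^{\dagger}$ denotes the Moore–Penrose inverse, $\rho(\cdot)$ the spectral radius, $R(\cdot)$, $N(\cdot)$ range and null space; inequalities are entrywise. A splitting $A=U-V$ is proper if $R(U)=R(A)$ and $N(U)=N(A)$; a proper splitting is proper weak regular if $U^{\dagger}\geq 0$ and $U^{\dagger}V\geq 0$. A proper weak regular multisplitting of $A$ is a triplet $(U_k,V_k,E_k)_{k=1}^{p}$ where each $A=U_k-V_k$ is a proper weak regular splitting and each $E_k\geq 0$ is an $n\times n$ diagonal matrix with $\sum_{k=1}^{p}E_k=I_n$. *)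

theory Defs
  imports "Jordan_Normal_Form.Spectral_Radius"
begin

definition nonneg_mat :: "real mat \<Rightarrow> bool" where
  "nonneg_mat A \<longleftrightarrow> (\<forall>i < dim_row A. \<forall>j < dim_col A. A $$ (i, j) \<ge> 0)"

definition mat_ge :: "real mat \<Rightarrow> real mat \<Rightarrow> bool" where
  "mat_ge A B \<longleftrightarrow> dim_row A = dim_row B \<and> dim_col A = dim_col B \<and>
     (\<forall>i < dim_row A. \<forall>j < dim_col A. A $$ (i, j) \<ge> B $$ (i, j))"

definition is_mp_inverse :: "real mat \<Rightarrow> real mat \<Rightarrow> bool" where
  "is_mp_inverse A X \<longleftrightarrow> X \<in> carrier_mat (dim_col A) (dim_row A) \<and>
     A * X * A = A \<and> X * A * X = X \<and>
     transpose_mat (A * X) = A * X \<and> transpose_mat (X * A) = X * A"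

text \<open>Moore--Penrose inverse (exists and is unique for every real matrix).\<close>
definition mp_inverse :: "real mat \<Rightarrow> real mat" where
  "mp_inverse A = (THE X. is_mp_inverse A X)"

definition range_mat :: "real mat \<Rightarrow> real vec set" where
  "range_mat A = {A *\<^sub>v x | x. x \<in> carrier_vec (dim_col A)}"

definition null_mat :: "real mat \<Rightarrow> real vec set" where
  "null_mat A = {x \<in> carrier_vec (dim_col A). A *\<^sub>v x = 0\<^sub>v (dim_row A)}"

definition proper_splitting :: "real mat \<Rightarrow> real mat \<Rightarrow> real mat \<Rightarrow> bool" where
  "proper_splitting A U V \<longleftrightarrow>
     U \<in> carrier_mat (dim_row A) (dim_col A) \<and> V \<in> carrier_mat (dim_row A) (dim_col A) \<and>
     A = U - V \<and> range_mat U = range_mat A \<and> null_mat U = null_mat A"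

definition proper_weak_regular_splitting :: "real mat \<Rightarrow> real mat \<Rightarrow> real mat \<Rightarrow> bool" where
  "proper_weak_regular_splitting A U V \<longleftrightarrow>
     proper_splitting A U V \<and> nonneg_mat (mp_inverse U) \<and> nonneg_mat (mp_inverse U * V)"

fun mat_sum :: "nat \<Rightarrow> nat \<Rightarrow> (nat \<Rightarrow> real mat) \<Rightarrow> nat \<Rightarrow> real mat" where
  "mat_sum nr nc f 0 = 0\<^sub>m nr nc"
| "mat_sum nr nc f (Suc p) = mat_sum nr nc f p + f p"

definition proper_weak_regular_multisplitting ::
  "real mat \<Rightarrow> nat \<Rightarrow> (nat \<Rightarrow> real mat) \<Rightarrow> (nat \<Rightarrow> real mat) \<Rightarrow> (nat \<Rightarrow> real mat) \<Rightarrow> bool" where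
  "proper_weak_regular_multisplitting A p U V E \<longleftrightarrow>
     (\<forall>k < p. proper_weak_regular_splitting A (U k) (V k) \<and>
              E k \<in> carrier_mat (dim_col A) (dim_col A) \<and> diagonal_mat (E k) \<and> nonneg_mat (E k)) \<and>
     mat_sum (dim_col A) (dim_col A) E p = 1\<^sub>m (dim_col A)"

definition multisplitting_iter :: "nat \<Rightarrow> nat \<Rightarrow> (nat \<Rightarrow> real mat) \<Rightarrow> (nat \<Rightarrow> real mat) \<Rightarrow> (nat \<Rightarrow> real mat) \<Rightarrow> real mat" where
  "multisplitting_iter n p U V E = mat_sum n n (\<lambda>k. E k * mp_inverse (U k) * V k) p"

definition rho :: "real mat \<Rightarrow> real" where
  "rho H = spectral_radius (map_mat complex_of_real H)"

end

theory Submission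
  imports Defs
begin


lemma real_vec_self_zero:
  fixes v :: "real vec"
  assumes v: "v \<in> carrier_vec k" and z: "v \<bullet> v = 0"
  shows "v = 0\<^sub>v k"
proof -
  have "(\<Sum>i\<in>{0..<k}. v $ i * v $ i) = 0" using z v unfolding scalar_prod_def by auto
  hence "\<forall>i\<in>{0..<k}. v $ i * v $ i = 0"
    by (subst sum_nonneg_eq_0_iff[symmetric], auto)
  thus ?thesis using v by (intro eq_vecI, auto)
qed

lemma mp_inverse_inj:
  fixes M :: "real mat"
  assumes M: "M \<in> carrier_mat m n"
    and inj: "\<And>w. w \<in> carrier_vec n \<Longrightarrow> M *\<^sub>v w = 0\<^sub>v m \<Longrightarrow> w = 0\<^sub>v n"
  shows "is_mp_inverse M (mp_inverse M) \<and> mp_inverse M * M = 1\<^sub>m n"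
proof -
  define Mt where "Mt = transpose_mat M"
  have Mt: "Mt \<in> carrier_mat n m" using M unfolding Mt_def by auto
  define G where "G = Mt * M"
  have G: "G \<in> carrier_mat n n" using M Mt unfolding G_def by auto
  have Gt: "transpose_mat G = G" unfolding G_def Mt_def
    using transpose_mult[OF Mt[unfolded Mt_def] M] by simp
  have "det G \<noteq> 0"
  proof
    assume "det G = 0"
    then obtain v where v: "v \<in> carrier_vec n" "v \<noteq> 0\<^sub>v n" "G *\<^sub>v v = 0\<^sub>v n"
      using det_0_iff_vec_prod_zero_field[OF G] by blast
    have Mv: "M *\<^sub>v v \<in> carrier_vec m" using M v by simp
    have "(Mt *\<^sub>v (M *\<^sub>v v)) \<bullet> v = (M *\<^sub>v v) \<bullet> (M *\<^sub>v v)"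
      unfolding Mt_def by (rule transpose_vec_mult_scalar[OF M v(1) Mv])
    also have "Mt *\<^sub>v (M *\<^sub>v v) = G *\<^sub>v v" unfolding G_def by (rule assoc_mult_mat_vec[OF Mt M v(1), symmetric])
    finally have "(M *\<^sub>v v) \<bullet> (M *\<^sub>v v) = 0" using v(1) unfolding v(3) by simp
    hence "M *\<^sub>v v = 0\<^sub>v m" by (rule real_vec_self_zero[OF Mv])
    with inj v show False by auto
  qed
  then obtain Gi where Gi: "Gi \<in> carrier_mat n n" "Gi * G = 1\<^sub>m n" "G * Gi = 1\<^sub>m n"
    using det_non_zero_imp_unit[OF G, unfolded Units_def, of "()"]
    by (auto simp: ring_mat_def)
  have Git: "transpose_mat Gi = Gi"
  proof -
    have "transpose_mat Gi * G = 1\<^sub>m n"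
      using transpose_mult[OF G Gi(1)] Gi Gt by simp
    hence "transpose_mat Gi = transpose_mat Gi * (G * Gi)" using Gi by simp
    also have "\<dots> = (transpose_mat Gi * G) * Gi" using Gi G by (subst assoc_mult_mat[of _ n n _ n _ n], auto)
    also have "\<dots> = Gi" using \<open>transpose_mat Gi * G = 1\<^sub>m n\<close> Gi by simp
    finally show ?thesis .
  qed
  define X where "X = Gi * Mt"
  have X: "X \<in> carrier_mat n m" using Gi Mt unfolding X_def by auto
  have XM: "X * M = 1\<^sub>m n" unfolding X_def using Gi Mt M
    by (simp add: G_def[symmetric])
  have mp: "is_mp_inverse M X"
    unfolding is_mp_inverse_def
  proof (intro conjI)
    show "X \<in> carrier_mat (dim_col M) (dim_row M)" using X M by auto
    show "M * X * M = M" using M X XM by simp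
    show "X * M * X = X" using XM X by simp
    show "transpose_mat (X * M) = X * M" using XM by simp
    have "transpose_mat (M * X) = transpose_mat X * Mt" unfolding Mt_def
      using transpose_mult[OF M X] by simp
    also have "transpose_mat X = M * Gi" unfolding X_def Mt_def
      using transpose_mult[OF Gi(1) Mt[unfolded Mt_def]] Git by simp
    finally show "transpose_mat (M * X) = M * X" unfolding X_def using M Gi Mt by simp
  qed
  have uniq: "Y = X" if Y: "is_mp_inverse M Y" for Y
  proof -
    from Y have Yc: "Y \<in> carrier_mat n m" and MYM: "M * Y * M = M"
      and sym: "transpose_mat (M * Y) = M * Y"
      using M unfolding is_mp_inverse_def by auto
    have "G * Y = Mt * (M * Y)" unfolding G_def using Mt M Yc by simp
    also have "\<dots> = Mt * transpose_mat (M * Y)" using sym by simp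
    also have "\<dots> = transpose_mat (M * Y * M)" unfolding Mt_def
      using transpose_mult[OF mult_carrier_mat[OF M Yc] M] by simp
    also have "\<dots> = Mt" using MYM Mt_def by simp
    finally have GY: "G * Y = Mt" .
    have "Y = (Gi * G) * Y" using Yc by (simp add: Gi(2))
    also have "\<dots> = Gi * (G * Y)" by (rule assoc_mult_mat[OF Gi(1) G Yc])
    finally show ?thesis using GY X_def by simp
  qed
  have "mp_inverse M = X" unfolding mp_inverse_def
    using mp uniq by (rule the_equality)
  thus ?thesis using mp XM by simp
qed


lemma mult_index_sum:
  fixes A B :: "'a :: comm_semiring_0 mat"
  assumes "A \<in> carrier_mat nr n" "B \<in> carrier_mat n nc" "i < nr" "j < nc"
  shows "(A * B) $$ (i,j) = (\<Sum>l<n. A $$ (i,l) * B $$ (l,j))"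
  using assms by (simp add: scalar_prod_def lessThan_atLeast0)

lemma mv_index_sum:
  fixes A :: "'a :: comm_semiring_0 mat"
  assumes "A \<in> carrier_mat nr n" "v \<in> carrier_vec n" "i < nr"
  shows "(A *\<^sub>v v) $ i = (\<Sum>l<n. A $$ (i,l) * v $ l)"
  using assms by (simp add: scalar_prod_def lessThan_atLeast0)

lemma mat_sum_carrier:
  assumes "\<forall>k<p. f k \<in> carrier_mat nr nc"
  shows "mat_sum nr nc f p \<in> carrier_mat nr nc"
  using assms by (induction p) auto

lemma mat_sum_index:
  assumes "\<forall>k<p. f k \<in> carrier_mat nr nc" "i < nr" "j < nc"
  shows "mat_sum nr nc f p $$ (i,j) = (\<Sum>k<p. f k $$ (i,j))"
  using assms
proof (induction p)
  case 0 then show ?case by simp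
next
  case (Suc p)
  have c: "mat_sum nr nc f p \<in> carrier_mat nr nc" using Suc.prems mat_sum_carrier[of p f nr nc] by auto
  have fp: "f p \<in> carrier_mat nr nc" using Suc.prems(1) by auto
  have "mat_sum nr nc f (Suc p) $$ (i,j) = mat_sum nr nc f p $$ (i,j) + f p $$ (i,j)"
    using c fp Suc.prems(2,3) by simp
  then show ?case using Suc by simp
qed

lemma mat_sum_mult_vec:
  fixes f :: "nat \<Rightarrow> real mat"
  assumes "\<forall>k<p. f k \<in> carrier_mat nr nc" "v \<in> carrier_vec nc" "i < nr"
  shows "(mat_sum nr nc f p *\<^sub>v v) $ i = (\<Sum>k<p. (f k *\<^sub>v v) $ i)"
proof -
  have "(mat_sum nr nc f p *\<^sub>v v) $ i = (\<Sum>l<nc. mat_sum nr nc f p $$ (i,l) * v $ l)"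
    using mat_sum_carrier[OF assms(1)] assms by (intro mv_index_sum) auto
  also have "\<dots> = (\<Sum>l<nc. \<Sum>k<p. f k $$ (i,l) * v $ l)"
    using assms by (simp add: mat_sum_index sum_distrib_right)
  also have "\<dots> = (\<Sum>k<p. \<Sum>l<nc. f k $$ (i,l) * v $ l)" by (rule sum.swap)
  also have "\<dots> = (\<Sum>k<p. (f k *\<^sub>v v) $ i)"
    using assms by (intro sum.cong refl, subst mv_index_sum, auto)
  finally show ?thesis .
qed

lemma diag_mult_index:
  fixes E M :: "real mat"
  assumes E: "E \<in> carrier_mat n n" "diagonal_mat E" and M: "M \<in> carrier_mat n q"
    and ij: "i < n" "j < q"
  shows "(E * M) $$ (i,j) = E $$ (i,i) * M $$ (i,j)"
proof -
  have "(E * M) $$ (i,j) = (\<Sum>l<n. E $$ (i,l) * M $$ (l,j))" using assms by (intro mult_index_sum)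
  also have "\<dots> = (\<Sum>l\<in>{i}. E $$ (i,l) * M $$ (l,j))"
    using E ij by (intro sum.mono_neutral_right, auto simp: diagonal_mat_def)
  finally show ?thesis by simp
qed

lemma diag_mv_index:
  fixes E :: "real mat"
  assumes E: "E \<in> carrier_mat n n" "diagonal_mat E" and v: "v \<in> carrier_vec n"
    and i: "i < n"
  shows "(E *\<^sub>v v) $ i = E $$ (i,i) * v $ i"
proof -
  have "(E *\<^sub>v v) $ i = (\<Sum>l<n. E $$ (i,l) * v $ l)" using assms by (intro mv_index_sum)
  also have "\<dots> = (\<Sum>l\<in>{i}. E $$ (i,l) * v $ l)"
    using E i by (intro sum.mono_neutral_right, auto simp: diagonal_mat_def)
  finally show ?thesis by simp
qed



lemma rho_lt_1:
  fixes H :: "real mat" and x :: "real vec"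
  assumes H: "H \<in> carrier_mat n n" and n: "0 < n" and Hnn: "nonneg_mat H"
    and x: "x \<in> carrier_vec n" and xpos: "\<forall>i<n. 0 < x $ i"
    and Hx: "\<forall>i<n. (H *\<^sub>v x) $ i < x $ i"
  shows "rho H < 1"
proof -
  define Hc where "Hc = map_mat complex_of_real H"
  have Hc: "Hc \<in> carrier_mat n n" using H unfolding Hc_def by auto
  from spectral_radius_mem_max(1)[OF Hc n] obtain lam where
    lam: "lam \<in> spectrum Hc" and rl: "rho H = norm lam"
    unfolding rho_def Hc_def[symmetric] by auto
  from lam obtain v where v: "v \<in> carrier_vec n" "v \<noteq> 0\<^sub>v n" "Hc *\<^sub>v v = lam \<cdot>\<^sub>v v"
    unfolding spectrum_def eigenvalue_def eigenvector_def using Hc by auto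
  define r where "r i = norm (v $ i) / x $ i" for i
  have "Max (r ` {..<n}) \<in> r ` {..<n}" using n by (intro Max_in) auto
  then obtain i0 where i0: "i0 < n" "r i0 = Max (r ` {..<n})" by auto
  have rle: "r j \<le> r i0" if "j < n" for j
    using i0 that by (simp add: Max_ge)
  obtain j where j: "j < n" "v $ j \<noteq> 0"
    using v by (metis eq_vecI carrier_vecD index_zero_vec(1,2))
  have "0 < r j" unfolding r_def using j xpos by auto
  hence cpos: "0 < r i0" using rle[OF j(1)] by auto
  have bnd: "norm (v $ l) \<le> r i0 * x $ l" if "l < n" for l
  proof -
    have "norm (v $ l) = r l * x $ l" unfolding r_def using xpos that by auto
    also have "\<dots> \<le> r i0 * x $ l" using rle[OF that] xpos that by (intro mult_right_mono) auto
    finally show ?thesis .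
  qed
  have "norm lam * norm (v $ i0) = norm ((Hc *\<^sub>v v) $ i0)"
    using v i0 by (simp add: norm_mult)
  also have "(Hc *\<^sub>v v) $ i0 = (\<Sum>l<n. Hc $$ (i0,l) * v $ l)"
    using Hc v i0 by (intro mv_index_sum)
  also have "norm \<dots> \<le> (\<Sum>l<n. norm (Hc $$ (i0,l) * v $ l))" by (rule norm_sum)
  also have "\<dots> \<le> (\<Sum>l<n. H $$ (i0,l) * (r i0 * x $ l))"
  proof (intro sum_mono)
    fix l assume l: "l \<in> {..<n}"
    have h: "0 \<le> H $$ (i0,l)" using Hnn H i0 l unfolding nonneg_mat_def by auto
    have "norm (Hc $$ (i0,l) * v $ l) = H $$ (i0,l) * norm (v $ l)"
      using H i0 l h unfolding Hc_def by (simp add: norm_mult)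
    also have "\<dots> \<le> H $$ (i0,l) * (r i0 * x $ l)" using bnd l h by (intro mult_left_mono) auto
    finally show "norm (Hc $$ (i0,l) * v $ l) \<le> H $$ (i0,l) * (r i0 * x $ l)" .
  qed
  also have "\<dots> = r i0 * (\<Sum>l<n. H $$ (i0,l) * x $ l)"
    by (simp add: sum_distrib_left algebra_simps)
  also have "(\<Sum>l<n. H $$ (i0,l) * x $ l) = (H *\<^sub>v x) $ i0"
    using H x i0 by (intro mv_index_sum[symmetric])
  also have "r i0 * (H *\<^sub>v x) $ i0 < r i0 * x $ i0"
    using Hx i0 cpos by auto
  also have "r i0 * x $ i0 = norm (v $ i0)" unfolding r_def using xpos i0 by auto
  finally have "norm lam * norm (v $ i0) < 1 * norm (v $ i0)" by simp
  hence "norm lam < 1" by (metis mult_less_cancel_right norm_ge_zero not_less)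
  thus ?thesis using rl by simp
qed



lemma mv_mono:
  fixes M :: "real mat"
  assumes M: "M \<in> carrier_mat n n" "nonneg_mat M" and u: "u \<in> carrier_vec n" and w: "w \<in> carrier_vec n"
    and le: "\<forall>l<n. u $ l \<le> w $ l" and i: "i < n"
  shows "(M *\<^sub>v u) $ i \<le> (M *\<^sub>v w) $ i"
proof -
  have "(\<Sum>l<n. M $$ (i,l) * u $ l) \<le> (\<Sum>l<n. M $$ (i,l) * w $ l)"
    using M le i by (intro sum_mono mult_left_mono) (auto simp: nonneg_mat_def)
  thus ?thesis using mv_index_sum[OF M(1) u i] mv_index_sum[OF M(1) w i] by simp
qed

lemma nonneg_pow:
  fixes D :: "real mat"
  assumes D: "D \<in> carrier_mat n n" "nonneg_mat D"
  shows "nonneg_mat (D ^\<^sub>m k)"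
proof (induction k)
  case 0 then show ?case using D by (auto simp: nonneg_mat_def)
next
  case (Suc k)
  have Dk: "D ^\<^sub>m k \<in> carrier_mat n n" using D by auto
  show ?case unfolding nonneg_mat_def
  proof (intro allI impI)
    fix i j assume ij: "i < dim_row (D ^\<^sub>m Suc k)" "j < dim_col (D ^\<^sub>m Suc k)"
    hence ij': "i < n" "j < n" using D by auto
    have "(D ^\<^sub>m Suc k) $$ (i,j) = (\<Sum>l<n. (D ^\<^sub>m k) $$ (i,l) * D $$ (l,j))"
      using mult_index_sum[OF Dk D(1) ij'] by simp
    also have "\<dots> \<ge> 0" using Suc D Dk ij' by (intro sum_nonneg mult_nonneg_nonneg) (auto simp: nonneg_mat_def)
    finally show "0 \<le> (D ^\<^sub>m Suc k) $$ (i,j)" .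
  qed
qed

lemma pow_lower:
  fixes D :: "real mat"
  assumes D: "D \<in> carrier_mat n n" "nonneg_mat D" and y: "y \<in> carrier_vec n"
    and q: "0 \<le> q" and Dy: "\<forall>i<n. q * y $ i \<le> (D *\<^sub>v y) $ i"
  shows "\<forall>i<n. q ^ k * y $ i \<le> (D ^\<^sub>m k *\<^sub>v y) $ i"
proof (induction k)
  case 0 then show ?case using D y by simp
next
  case (Suc k)
  have Dk: "D ^\<^sub>m k \<in> carrier_mat n n" using D by auto
  show ?case
  proof (intro allI impI)
    fix i assume i: "i < n"
    have "q * (q ^ k * y $ i) \<le> q * (D ^\<^sub>m k *\<^sub>v y) $ i" using Suc i q by (intro mult_left_mono) auto
    also have "q * (D ^\<^sub>m k *\<^sub>v y) $ i = (D ^\<^sub>m k *\<^sub>v (q \<cdot>\<^sub>v y)) $ i"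
      using Dk y i by (simp add: mv_index_sum sum_distrib_left algebra_simps)
    also have "\<dots> \<le> (D ^\<^sub>m k *\<^sub>v (D *\<^sub>v y)) $ i"
      using Dy D y i by (intro mv_mono[OF Dk nonneg_pow[OF D]]) auto
    also have "\<dots> = (D ^\<^sub>m Suc k *\<^sub>v y) $ i"
      using assoc_mult_mat_vec[OF Dk D(1) y] by simp
    finally show "q ^ Suc k * y $ i \<le> (D ^\<^sub>m Suc k *\<^sub>v y) $ i" by (simp add: algebra_simps)
  qed
qed



lemma rho_ge_0: assumes "B \<in> carrier_mat n n" "0 < n" shows "0 \<le> rho B"
proof -
  have "map_mat complex_of_real B \<in> carrier_mat n n" using assms by auto
  from spectral_radius_mem_max(1)[OF this assms(2)] show ?thesis unfolding rho_def by auto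
qed

lemma rho_CW:
  fixes B :: "real mat" and y :: "real vec"
  assumes B: "B \<in> carrier_mat n n" and n: "0 < n" and Bnn: "nonneg_mat B"
    and y: "y \<in> carrier_vec n" and ynn: "\<forall>i<n. 0 \<le> y $ i" and i0: "i0 < n" "0 < y $ i0"
    and r: "0 \<le> r" and By: "\<forall>i<n. r * y $ i \<le> (B *\<^sub>v y) $ i"
  shows "r \<le> rho B"
proof (rule ccontr)
  assume "\<not> r \<le> rho B"
  hence lt: "rho B < r" by simp
  define s where "s = (rho B + r) / 2"
  have rb0: "0 \<le> rho B" using rho_ge_0[OF B n] .
  have s: "0 < s" "rho B < s" "s < r" using lt rb0 unfolding s_def by auto
  define D where "D = map_mat (\<lambda>a. a / s) B"
  have D: "D \<in> carrier_mat n n" using B unfolding D_def by auto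
  have Dnn: "nonneg_mat D" using Bnn B s unfolding D_def nonneg_mat_def by auto
  define C where "C = map_mat complex_of_real D"
  have C: "C \<in> carrier_mat n n" using D unfolding C_def by auto
  define Bc where "Bc = map_mat complex_of_real B"
  have Bc: "Bc \<in> carrier_mat n n" using B unfolding Bc_def by auto
  have "spectral_radius C < 1"
  proof -
    from spectral_radius_mem_max(1)[OF C n] obtain mu where
      mu: "mu \<in> spectrum C" and rm: "spectral_radius C = norm mu" by auto
    from mu obtain v where v: "v \<in> carrier_vec n" "v \<noteq> 0\<^sub>v n" "C *\<^sub>v v = mu \<cdot>\<^sub>v v"
      unfolding spectrum_def eigenvalue_def eigenvector_def using C by auto
    have "Bc *\<^sub>v v = (of_real s * mu) \<cdot>\<^sub>v v"
    proof (rule eq_vecI)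
      fix i assume "i < dim_vec ((of_real s * mu) \<cdot>\<^sub>v v)"
      hence i: "i < n" using v by auto
      have "(Bc *\<^sub>v v) $ i = (\<Sum>l<n. Bc $$ (i,l) * v $ l)" by (rule mv_index_sum[OF Bc v(1) i])
      also have "\<dots> = of_real s * (\<Sum>l<n. C $$ (i,l) * v $ l)"
        unfolding sum_distrib_left
        using B i s unfolding Bc_def C_def D_def by (intro sum.cong refl) auto
      also have "(\<Sum>l<n. C $$ (i,l) * v $ l) = (C *\<^sub>v v) $ i" by (rule mv_index_sum[OF C v(1) i, symmetric])
      also have "\<dots> = mu * v $ i" using v i by simp
      finally show "(Bc *\<^sub>v v) $ i = ((of_real s * mu) \<cdot>\<^sub>v v) $ i" using v i by simp
    qed (use v Bc in auto)
    hence "eigenvector Bc v (of_real s * mu)" unfolding eigenvector_def using v Bc by auto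
    hence "of_real s * mu \<in> spectrum Bc" unfolding spectrum_def eigenvalue_def by auto
    hence "norm (of_real s * mu) \<le> rho B"
      using spectral_radius_mem_max(2)[OF Bc n] unfolding rho_def Bc_def[symmetric] by auto
    hence "s * norm mu \<le> rho B" using s by (simp add: norm_mult)
    hence "s * norm mu < s * 1" using s(2) by linarith
    hence "norm mu < 1" using s(1) mult_less_cancel_left_pos by blast
    thus ?thesis using rm by simp
  qed
  then obtain c0 where c0: "\<forall>k. norm_bound (C ^\<^sub>m k) c0"
    using spectral_radius_jnf_norm_bound_less_1_upper_triangular[OF C] by auto
  have Dk_bnd: "(D ^\<^sub>m k) $$ (i,l) \<le> c0" if "i < n" "l < n" for k i l
  proof -
    have "C ^\<^sub>m k = map_mat complex_of_real (D ^\<^sub>m k)"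
      unfolding C_def by (rule of_real_hom.mat_hom_pow[OF D, symmetric])
    hence "(C ^\<^sub>m k) $$ (i,l) = complex_of_real ((D ^\<^sub>m k) $$ (i,l))" using that D by simp
    moreover have "norm ((C ^\<^sub>m k) $$ (i,l)) \<le> c0" using c0 that C unfolding norm_bound_def by auto
    ultimately show ?thesis by auto
  qed
  have q: "0 \<le> r / s" using r s by auto
  have Dy: "\<forall>i<n. (r / s) * y $ i \<le> (D *\<^sub>v y) $ i"
  proof (intro allI impI)
    fix i assume i: "i < n"
    have "(D *\<^sub>v y) $ i = (\<Sum>l<n. D $$ (i,l) * y $ l)" by (rule mv_index_sum[OF D y i])
    also have "\<dots> = (\<Sum>l<n. B $$ (i,l) * y $ l) / s"
      unfolding sum_divide_distrib using B i unfolding D_def by (intro sum.cong refl) auto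
    also have "(\<Sum>l<n. B $$ (i,l) * y $ l) = (B *\<^sub>v y) $ i" by (rule mv_index_sum[OF B y i, symmetric])
    finally show "(r / s) * y $ i \<le> (D *\<^sub>v y) $ i" using By i s by (simp add: divide_right_mono)
  qed
  note pl = pow_lower[OF D Dnn y q Dy]
  define S where "S = (\<Sum>l<n. y $ l)"
  have bound: "(r / s) ^ k * y $ i0 \<le> c0 * S" for k
  proof -
    have "(r / s) ^ k * y $ i0 \<le> (D ^\<^sub>m k *\<^sub>v y) $ i0" using pl i0 by auto
    also have "\<dots> = (\<Sum>l<n. (D ^\<^sub>m k) $$ (i0,l) * y $ l)"
      by (rule mv_index_sum[OF pow_carrier_mat[OF D] y i0(1)])
    also have "\<dots> \<le> (\<Sum>l<n. c0 * y $ l)"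
      using Dk_bnd i0 ynn by (intro sum_mono mult_right_mono) auto
    also have "\<dots> = c0 * S" unfolding S_def by (simp add: sum_distrib_left)
    finally show ?thesis .
  qed
  have "1 < r / s" using s by auto
  then obtain k where "c0 * S / y $ i0 < (r / s) ^ k" using real_arch_pow by blast
  hence "c0 * S < (r / s) ^ k * y $ i0" using i0 by (simp add: pos_divide_less_eq)
  with bound[of k] show False by simp
qed



lemma rho_mono:
  fixes H1 H2 :: "real mat"
  assumes H1: "H1 \<in> carrier_mat n n" and H2: "H2 \<in> carrier_mat n n" and n: "0 < n"
    and le: "\<forall>i<n. \<forall>j<n. 0 \<le> H1 $$ (i,j) \<and> H1 $$ (i,j) \<le> H2 $$ (i,j)"
  shows "rho H1 \<le> rho H2"
proof -
  define Hc where "Hc = map_mat complex_of_real H1"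
  have Hc: "Hc \<in> carrier_mat n n" using H1 unfolding Hc_def by auto
  from spectral_radius_mem_max(1)[OF Hc n] obtain lam where
    lam: "lam \<in> spectrum Hc" and rl: "rho H1 = norm lam"
    unfolding rho_def Hc_def[symmetric] by auto
  from lam obtain v where v: "v \<in> carrier_vec n" "v \<noteq> 0\<^sub>v n" "Hc *\<^sub>v v = lam \<cdot>\<^sub>v v"
    unfolding spectrum_def eigenvalue_def eigenvector_def using Hc by auto
  obtain j where j: "j < n" "v $ j \<noteq> 0"
    using v by (metis eq_vecI carrier_vecD index_zero_vec(1,2))
  define y where "y = vec n (\<lambda>i. norm (v $ i))"
  have y: "y \<in> carrier_vec n" unfolding y_def by simp
  have H2nn: "nonneg_mat H2" using le H2 unfolding nonneg_mat_def by (auto intro: order.trans)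
  show ?thesis
  proof (rule rho_CW[OF H2 n H2nn y _ j(1)])
    show "\<forall>i<n. 0 \<le> y $ i" unfolding y_def by simp
    show "0 < y $ j" unfolding y_def using j by simp
    show "0 \<le> rho H1" using rl by simp
    show "\<forall>i<n. rho H1 * y $ i \<le> (H2 *\<^sub>v y) $ i"
    proof (intro allI impI)
      fix i assume i: "i < n"
      have "rho H1 * y $ i = norm ((Hc *\<^sub>v v) $ i)"
        using v i rl unfolding y_def by (simp add: norm_mult)
      also have "(Hc *\<^sub>v v) $ i = (\<Sum>l<n. Hc $$ (i,l) * v $ l)"
        by (rule mv_index_sum[OF Hc v(1) i])
      also have "norm \<dots> \<le> (\<Sum>l<n. norm (Hc $$ (i,l) * v $ l))" by (rule norm_sum)
      also have "\<dots> \<le> (\<Sum>l<n. H2 $$ (i,l) * y $ l)"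
      proof (intro sum_mono)
        fix l assume l: "l \<in> {..<n}"
        have "norm (Hc $$ (i,l) * v $ l) = H1 $$ (i,l) * y $ l"
          using H1 i l le unfolding Hc_def y_def by (simp add: norm_mult)
        also have "\<dots> \<le> H2 $$ (i,l) * y $ l" using le i l unfolding y_def
          by (intro mult_right_mono) auto
        finally show "norm (Hc $$ (i,l) * v $ l) \<le> H2 $$ (i,l) * y $ l" .
      qed
      also have "\<dots> = (H2 *\<^sub>v y) $ i" by (rule mv_index_sum[OF H2 y i, symmetric])
      finally show "rho H1 * y $ i \<le> (H2 *\<^sub>v y) $ i" .
    qed
  qed
qed

lemma mat_sum_scalar:
  fixes f :: "nat \<Rightarrow> real mat"
  assumes "\<forall>k<p. f k \<in> carrier_mat nr nc" "v \<in> carrier_vec nc" "w \<in> carrier_vec nr"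
  shows "w \<bullet> (mat_sum nr nc f p *\<^sub>v v) = (\<Sum>k<p. w \<bullet> (f k *\<^sub>v v))"
  using assms
proof (induction p)
  case 0
  have "0\<^sub>m nr nc *\<^sub>v v = 0\<^sub>v nr" using "0"(2) by (intro eq_vecI) (auto simp: scalar_prod_def)
  then show ?case using 0 by simp
next
  case (Suc p)
  have c: "mat_sum nr nc f p \<in> carrier_mat nr nc" using Suc.prems mat_sum_carrier[of p f nr nc] by auto
  have fp: "f p \<in> carrier_mat nr nc" using Suc.prems(1) by auto
  have cv: "mat_sum nr nc f p *\<^sub>v v \<in> carrier_vec nr" "f p *\<^sub>v v \<in> carrier_vec nr"
    using c fp Suc.prems(2) by (auto intro: mult_mat_vec_carrier)
  have "mat_sum nr nc f (Suc p) *\<^sub>v v = mat_sum nr nc f p *\<^sub>v v + f p *\<^sub>v v"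
    using add_mult_distrib_mat_vec[OF c fp Suc.prems(2)] by simp
  hence "w \<bullet> (mat_sum nr nc f (Suc p) *\<^sub>v v) = w \<bullet> (mat_sum nr nc f p *\<^sub>v v) + w \<bullet> (f p *\<^sub>v v)"
    using scalar_prod_add_distrib[OF Suc.prems(3) cv] by simp
  then show ?case using Suc by simp
qed

lemma A_inj:
  fixes A :: "real mat"
  assumes A: "A \<in> carrier_mat m n" and E: "\<forall>k<p. E k \<in> carrier_mat n n"
    and sumE: "mat_sum n n E p = 1\<^sub>m n"
    and rng: "\<forall>k<p. range_mat (E k) \<subseteq> range_mat (transpose_mat A)"
    and w: "w \<in> carrier_vec n" and Aw: "A *\<^sub>v w = 0\<^sub>v m"
  shows "w = 0\<^sub>v n"
proof -
  have each: "w \<bullet> (E k *\<^sub>v w) = 0" if k: "k < p" for k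
  proof -
    have "E k *\<^sub>v w \<in> range_mat (E k)" unfolding range_mat_def using E k w by auto
    with rng k obtain y where y: "y \<in> carrier_vec m" "E k *\<^sub>v w = transpose_mat A *\<^sub>v y"
      unfolding range_mat_def using A by auto
    have "w \<bullet> (E k *\<^sub>v w) = (transpose_mat A *\<^sub>v y) \<bullet> w"
      unfolding y(2) using A y w by (intro comm_scalar_prod[of _ n]) auto
    also have "\<dots> = y \<bullet> (A *\<^sub>v w)" by (rule transpose_vec_mult_scalar[OF A w y(1)])
    also have "\<dots> = 0" unfolding Aw using y by simp
    finally show ?thesis .
  qed
  have "w \<bullet> w = w \<bullet> (mat_sum n n E p *\<^sub>v w)" unfolding sumE using w by simp
  also have "\<dots> = (\<Sum>k<p. w \<bullet> (E k *\<^sub>v w))" by (rule mat_sum_scalar[OF E w w])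
  also have "\<dots> = 0" using each by simp
  finally show ?thesis by (rule real_vec_self_zero[OF w])
qed



lemma splitting_facts:
  fixes A U V :: "real mat"
  assumes A: "A \<in> carrier_mat m n"
    and Ainj: "\<And>w. w \<in> carrier_vec n \<Longrightarrow> A *\<^sub>v w = 0\<^sub>v m \<Longrightarrow> w = 0\<^sub>v n"
    and spl: "proper_weak_regular_splitting A U V"
  shows "U \<in> carrier_mat m n" "V \<in> carrier_mat m n"
    "mp_inverse U \<in> carrier_mat n m"
    "mp_inverse U * V = 1\<^sub>m n - mp_inverse U * A"
    "mp_inverse U * U = 1\<^sub>m n"
    "mp_inverse U * (A * mp_inverse A) = mp_inverse U"
    "nonneg_mat (mp_inverse U)" "nonneg_mat (mp_inverse U * V)"
proof -
  from spl have U: "U \<in> carrier_mat m n" and V: "V \<in> carrier_mat m n" and AUV: "A = U - V"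
    and rg: "range_mat U = range_mat A" and nl: "null_mat U = null_mat A"
    and nn: "nonneg_mat (mp_inverse U)" "nonneg_mat (mp_inverse U * V)"
    unfolding proper_weak_regular_splitting_def proper_splitting_def using A by auto
  show "U \<in> carrier_mat m n" "V \<in> carrier_mat m n" by fact+
  show "nonneg_mat (mp_inverse U)" "nonneg_mat (mp_inverse U * V)" by fact+
  have Uinj: "w = 0\<^sub>v n" if w: "w \<in> carrier_vec n" "U *\<^sub>v w = 0\<^sub>v m" for w
  proof -
    have "w \<in> null_mat U" unfolding null_mat_def using U w by auto
    hence "w \<in> null_mat A" using nl by simp
    hence "A *\<^sub>v w = 0\<^sub>v m" unfolding null_mat_def using A by auto
    thus ?thesis using Ainj w by auto
  qed
  note mpU = mp_inverse_inj[OF U Uinj]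
  note mpA = mp_inverse_inj[OF A Ainj]
  define Ui where "Ui = mp_inverse U"
  define Ai where "Ai = mp_inverse A"
  have Ui: "Ui \<in> carrier_mat n m" using mpU U unfolding Ui_def is_mp_inverse_def by auto
  have Ai: "Ai \<in> carrier_mat n m" using mpA A unfolding Ai_def is_mp_inverse_def by auto
  show "mp_inverse U \<in> carrier_mat n m" using Ui Ui_def by simp
  have UiU: "Ui * U = 1\<^sub>m n" using mpU Ui_def by simp
  show "mp_inverse U * U = 1\<^sub>m n" using UiU Ui_def by simp
  have VUA: "V = U - A" unfolding AUV using U V by (intro eq_matI) auto
  have "Ui * V = Ui * U - Ui * A" unfolding VUA by (rule mult_minus_distrib_mat[OF Ui U A])
  thus "mp_inverse U * V = 1\<^sub>m n - mp_inverse U * A" using UiU Ui_def by simp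
  have "\<forall>j<n. \<exists>y. y \<in> carrier_vec n \<and> A *\<^sub>v y = col U j"
  proof (intro allI impI)
    fix j assume j: "j < n"
    have "col U j = U *\<^sub>v unit_vec n j" using U j by (intro eq_vecI) auto
    hence "col U j \<in> range_mat U" unfolding range_mat_def using U by auto
    hence "col U j \<in> range_mat A" using rg by simp
    thus "\<exists>y. y \<in> carrier_vec n \<and> A *\<^sub>v y = col U j" unfolding range_mat_def using A by auto
  qed
  then obtain yf where yf: "\<And>j. j < n \<Longrightarrow> yf j \<in> carrier_vec n \<and> A *\<^sub>v yf j = col U j" by metis
  define Y where "Y = mat n n (\<lambda>(i,j). yf j $ i)"
  have Y: "Y \<in> carrier_mat n n" unfolding Y_def by auto
  have AY: "A * Y = U"
  proof (rule eq_matI)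
    fix i j assume ij: "i < dim_row U" "j < dim_col U"
    hence i: "i < m" and j: "j < n" using U by auto
    have "col Y j = yf j" unfolding Y_def using j yf[OF j] by (intro eq_vecI) auto
    hence "(A * Y) $$ (i,j) = row A i \<bullet> yf j" using A Y i j by simp
    also have "\<dots> = (A *\<^sub>v yf j) $ i" using A i by simp
    also have "\<dots> = U $$ (i,j)" using yf[OF j] U i j by simp
    finally show "(A * Y) $$ (i,j) = U $$ (i,j)" .
  qed (use A Y U in auto)
  define Q where "Q = A * Ai"
  define P where "P = U * Ui"
  have Q: "Q \<in> carrier_mat m m" unfolding Q_def using A Ai by auto
  have P: "P \<in> carrier_mat m m" unfolding P_def using U Ui by auto
  have AAiA: "A * Ai * A = A" using mpA Ai_def unfolding is_mp_inverse_def by auto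
  have Qs: "transpose_mat Q = Q" using mpA Ai_def Q_def unfolding is_mp_inverse_def by auto
  have Ps: "transpose_mat P = P" using mpU Ui_def P_def unfolding is_mp_inverse_def by auto
  have UiUUi: "Ui * U * Ui = Ui" using mpU Ui_def unfolding is_mp_inverse_def by auto
  have QU: "Q * U = U"
  proof -
    have "Q * U = (A * Ai * A) * Y" unfolding Q_def AY[symmetric]
      by (rule assoc_mult_mat[OF mult_carrier_mat[OF A Ai] A Y, symmetric])
    also have "\<dots> = U" using AAiA AY by simp
    finally show ?thesis .
  qed
  have QP: "Q * P = P" unfolding P_def using QU Q U Ui
    by (metis assoc_mult_mat)
  have PQ: "P * Q = P"
  proof -
    have "transpose_mat (Q * P) = transpose_mat P * transpose_mat Q" by (rule transpose_mult[OF Q P])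
    thus ?thesis using QP Ps Qs by simp
  qed
  have UiP: "Ui * P = Ui" unfolding P_def using UiUUi assoc_mult_mat[OF Ui U Ui] by simp
  have "Ui * Q = (Ui * P) * Q" using UiP by simp
  also have "\<dots> = Ui * (P * Q)" by (rule assoc_mult_mat[OF Ui P Q])
  also have "\<dots> = Ui" using PQ UiP by simp
  finally show "mp_inverse U * (A * mp_inverse A) = mp_inverse U" unfolding Q_def Ui_def Ai_def .
qed



lemma ms_facts:
  fixes A :: "real mat"
  assumes A: "A \<in> carrier_mat m n"
    and Ainj0: "\<forall>w\<in>carrier_vec n. A *\<^sub>v w = 0\<^sub>v m \<longrightarrow> w = 0\<^sub>v n"
    and ms: "proper_weak_regular_multisplitting A p U V E"
  shows "multisplitting_iter n p U V E \<in> carrier_mat n n"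
    "\<And>i j. i < n \<Longrightarrow> j < n \<Longrightarrow> multisplitting_iter n p U V E $$ (i,j)
        = (\<Sum>k<p. E k $$ (i,i) * (mp_inverse (U k) * V k) $$ (i,j))"
    "\<And>x i. x \<in> carrier_vec n \<Longrightarrow> i < n \<Longrightarrow> (multisplitting_iter n p U V E *\<^sub>v x) $ i
        = (\<Sum>k<p. E k $$ (i,i) * ((mp_inverse (U k) * V k) *\<^sub>v x) $ i)"
proof -
  have Ainj: "\<And>w. w \<in> carrier_vec n \<Longrightarrow> A *\<^sub>v w = 0\<^sub>v m \<Longrightarrow> w = 0\<^sub>v n" using Ainj0 by auto
  have spl: "\<And>k. k < p \<Longrightarrow> proper_weak_regular_splitting A (U k) (V k)"
    and E: "\<And>k. k < p \<Longrightarrow> E k \<in> carrier_mat n n \<and> diagonal_mat (E k)"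
    using ms A unfolding proper_weak_regular_multisplitting_def by auto
  have Uic: "mp_inverse (U k) \<in> carrier_mat n m" if k: "k < p" for k
    using splitting_facts(3)[OF A Ainj spl[OF k]] .
  have Vc: "V k \<in> carrier_mat m n" if k: "k < p" for k
    using splitting_facts(2)[OF A Ainj spl[OF k]] .
  define f where "f k = E k * mp_inverse (U k) * V k" for k
  have fe: "f k = E k * (mp_inverse (U k) * V k)" if k: "k < p" for k
    unfolding f_def using E[OF k] Uic[OF k] Vc[OF k] by (intro assoc_mult_mat) auto
  have UV: "mp_inverse (U k) * V k \<in> carrier_mat n n" if k: "k < p" for k
    using Uic[OF k] Vc[OF k] by auto
  have fc: "\<forall>k<p. f k \<in> carrier_mat n n"
  proof (intro allI impI)
    fix k assume k: "k < p"
    show "f k \<in> carrier_mat n n" unfolding fe[OF k] using E[OF k] UV[OF k] mult_carrier_mat by blast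
  qed
  have H: "multisplitting_iter n p U V E = mat_sum n n f p"
    unfolding multisplitting_iter_def f_def by simp
  show "multisplitting_iter n p U V E \<in> carrier_mat n n" unfolding H by (rule mat_sum_carrier[OF fc])
  show "multisplitting_iter n p U V E $$ (i,j)
        = (\<Sum>k<p. E k $$ (i,i) * (mp_inverse (U k) * V k) $$ (i,j))" if ij: "i < n" "j < n" for i j
    unfolding H mat_sum_index[OF fc ij]
  proof (intro sum.cong refl)
    fix k assume "k \<in> {..<p}" hence k: "k < p" by auto
    show "f k $$ (i,j) = E k $$ (i,i) * (mp_inverse (U k) * V k) $$ (i,j)"
      unfolding fe[OF k] using E[OF k] UV[OF k] ij by (intro diag_mult_index) auto
  qed
  show "(multisplitting_iter n p U V E *\<^sub>v x) $ i
        = (\<Sum>k<p. E k $$ (i,i) * ((mp_inverse (U k) * V k) *\<^sub>v x) $ i)"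
    if x: "x \<in> carrier_vec n" and i: "i < n" for x i
    unfolding H mat_sum_mult_vec[OF fc x i]
  proof (intro sum.cong refl)
    fix k assume "k \<in> {..<p}" hence k: "k < p" by auto
    show "(f k *\<^sub>v x) $ i = E k $$ (i,i) * ((mp_inverse (U k) * V k) *\<^sub>v x) $ i"
      unfolding fe[OF k] assoc_mult_mat_vec[OF conjunct1[OF E[OF k]] UV[OF k] x]
      using E[OF k] UV[OF k] x i by (intro diag_mv_index) auto
  qed
qed



lemma ms_rho_lt_1:
  fixes A :: "real mat"
  assumes A: "A \<in> carrier_mat m n" and n: "0 < n"
    and Ainj: "\<And>w. w \<in> carrier_vec n \<Longrightarrow> A *\<^sub>v w = 0\<^sub>v m \<Longrightarrow> w = 0\<^sub>v n"
    and Ann: "nonneg_mat (mp_inverse A)"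
    and ms: "proper_weak_regular_multisplitting A p U V E"
  shows "rho (multisplitting_iter n p U V E) < 1"
proof -
  have spl: "\<And>k. k < p \<Longrightarrow> proper_weak_regular_splitting A (U k) (V k)"
    and E: "\<And>k. k < p \<Longrightarrow> E k \<in> carrier_mat n n \<and> diagonal_mat (E k) \<and> nonneg_mat (E k)"
    and sumE: "mat_sum n n E p = 1\<^sub>m n"
    using ms A unfolding proper_weak_regular_multisplitting_def by auto
  note sf = splitting_facts[OF A Ainj spl]
  define H where "H = multisplitting_iter n p U V E"
  have Ainj0: "\<forall>w\<in>carrier_vec n. A *\<^sub>v w = 0\<^sub>v m \<longrightarrow> w = 0\<^sub>v n" using Ainj by auto
  note hf = ms_facts[OF A Ainj0 ms, folded H_def]
  define Ai where "Ai = mp_inverse A"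
  have Ai: "Ai \<in> carrier_mat n m" using mp_inverse_inj[OF A Ainj] A unfolding Ai_def is_mp_inverse_def by auto
  define one where "one = vec m (\<lambda>_. 1::real)"
  have one: "one \<in> carrier_vec m" unfolding one_def by simp
  define x where "x = Ai *\<^sub>v one"
  have x: "x \<in> carrier_vec n" unfolding x_def using Ai one by simp
  have xnn: "0 \<le> x $ i" if i: "i < n" for i
  proof -
    have "x $ i = (\<Sum>l<m. Ai $$ (i,l) * one $ l)" unfolding x_def by (rule mv_index_sum[OF Ai one i])
    also have "\<dots> \<ge> 0" using Ann Ai i unfolding Ai_def[symmetric] nonneg_mat_def one_def
      by (intro sum_nonneg) auto
    finally show ?thesis .
  qed
  have UVx: "((mp_inverse (U k) * V k) *\<^sub>v x) $ i = x $ i - (mp_inverse (U k) *\<^sub>v one) $ i"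
    if k: "k < p" and i: "i < n" for k i
  proof -
    define Ui where "Ui = mp_inverse (U k)"
    have Ui: "Ui \<in> carrier_mat n m" using splitting_facts(3)[OF A Ainj spl[OF k]] Ui_def by simp
    have UiV: "Ui * V k = 1\<^sub>m n - Ui * A" using splitting_facts(4)[OF A Ainj spl[OF k]] Ui_def by simp
    have UiQ: "Ui * (A * Ai) = Ui" using splitting_facts(6)[OF A Ainj spl[OF k]] Ui_def Ai_def by simp
    have UA: "Ui * A \<in> carrier_mat n n" using Ui A by simp
    have "(Ui * V k) *\<^sub>v x = 1\<^sub>m n *\<^sub>v x - (Ui * A) *\<^sub>v x"
      unfolding UiV by (rule minus_mult_distrib_mat_vec[OF one_carrier_mat UA x])
    also have "(Ui * A) *\<^sub>v x = ((Ui * A) * Ai) *\<^sub>v one"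
      unfolding x_def by (rule assoc_mult_mat_vec[OF UA Ai one, symmetric])
    also have "(Ui * A) * Ai = Ui" using assoc_mult_mat[OF Ui A Ai] UiQ by simp
    finally have "(Ui * V k) *\<^sub>v x = x - Ui *\<^sub>v one" using x by simp
    thus ?thesis using i x Ui one unfolding Ui_def[symmetric] by simp
  qed
  have bpos: "0 < (mp_inverse (U k) *\<^sub>v one) $ i" if k: "k < p" and i: "i < n" for k i
  proof -
    define Ui where "Ui = mp_inverse (U k)"
    have Ui: "Ui \<in> carrier_mat n m" using splitting_facts(3)[OF A Ainj spl[OF k]] Ui_def by simp
    have Uc: "U k \<in> carrier_mat m n" using splitting_facts(1)[OF A Ainj spl[OF k]] .
    have UiU: "Ui * U k = 1\<^sub>m n" using splitting_facts(5)[OF A Ainj spl[OF k]] Ui_def by simp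
    have Uinn: "\<forall>a<n. \<forall>b<m. 0 \<le> Ui $$ (a,b)"
      using splitting_facts(7)[OF A Ainj spl[OF k]] Ui Ui_def unfolding nonneg_mat_def by auto
    have "(\<Sum>l<m. Ui $$ (i,l) * U k $$ (l,i)) = 1"
      using mult_index_sum[OF Ui Uc i i] UiU i by simp
    then obtain l where l: "l < m" "Ui $$ (i,l) \<noteq> 0"
      by (metis (no_types, lifting) lessThan_iff mult_eq_0_iff sum.neutral zero_neq_one)
    have "(Ui *\<^sub>v one) $ i = (\<Sum>l<m. Ui $$ (i,l) * one $ l)" by (rule mv_index_sum[OF Ui one i])
    also have "\<dots> = (\<Sum>l<m. Ui $$ (i,l))" unfolding one_def by simp
    also have "\<dots> > 0" using l Uinn i by (intro sum_pos2[of _ l]) (auto simp: order.strict_iff_order)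
    finally show ?thesis unfolding Ui_def .
  qed
  have Hlt: "(H *\<^sub>v x) $ i < x $ i" if i: "i < n" for i
  proof -
    define e where "e k = E k $$ (i,i)" for k
    define b where "b k = (mp_inverse (U k) *\<^sub>v one) $ i" for k
    have esum: "(\<Sum>k<p. e k) = 1"
      using mat_sum_index[of p E n n i i] E i sumE unfolding e_def by simp
    have enn: "0 \<le> e k" if "k < p" for k using E[OF that] i unfolding e_def nonneg_mat_def by auto
    obtain k0 where k0: "k0 < p" "0 < e k0"
    proof -
      have "\<exists>k<p. 0 < e k"
      proof (rule ccontr)
        assume "\<not> (\<exists>k<p. 0 < e k)"
        hence "\<forall>k<p. e k = 0" using enn by (metis linorder_not_less order_antisym)
        hence "(\<Sum>k<p. e k) = 0" by simp
        with esum show False by simp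
      qed
      thus ?thesis using that by blast
    qed
    have "(H *\<^sub>v x) $ i = (\<Sum>k<p. e k * (x $ i - b k))"
      unfolding hf(3)[OF x i] e_def b_def using UVx i by (intro sum.cong refl) auto
    also have "\<dots> = (\<Sum>k<p. e k) * x $ i - (\<Sum>k<p. e k * b k)"
      by (simp add: right_diff_distrib sum_subtractf sum_distrib_right)
    also have "\<dots> = x $ i - (\<Sum>k<p. e k * b k)" using esum by simp
    also have "\<dots> < x $ i"
    proof -
      have "0 < (\<Sum>k<p. e k * b k)"
        using k0 enn bpos i unfolding b_def
        by (intro sum_pos2[of _ k0]) (auto intro: mult_pos_pos mult_nonneg_nonneg enn bpos[OF _ i] less_imp_le[OF bpos[OF _ i]])
      thus ?thesis by simp
    qed
    finally show ?thesis .
  qed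
  have Hc: "H \<in> carrier_mat n n" using hf(1) .
  have Hnn: "nonneg_mat H" unfolding nonneg_mat_def
  proof (intro allI impI)
    fix i j assume "i < dim_row H" "j < dim_col H"
    hence ij: "i < n" "j < n" using Hc by auto
    show "0 \<le> H $$ (i,j)" unfolding hf(2)[OF ij]
    proof (intro sum_nonneg mult_nonneg_nonneg)
      fix k assume "k \<in> {..<p}" hence k: "k < p" by auto
      show "0 \<le> E k $$ (i,i)" using E[OF k] ij unfolding nonneg_mat_def by auto
      have "mp_inverse (U k) * V k \<in> carrier_mat n n"
        using splitting_facts(3,2)[OF A Ainj spl[OF k]] by auto
      then show "0 \<le> (mp_inverse (U k) * V k) $$ (i,j)"
        using splitting_facts(8,3,2)[OF A Ainj spl[OF k]] ij unfolding nonneg_mat_def by auto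
    qed
  qed
  have xpos: "\<forall>i<n. 0 < x $ i"
  proof (intro allI impI)
    fix i assume i: "i < n"
    have "0 \<le> (H *\<^sub>v x) $ i"
    proof -
      have "(H *\<^sub>v x) $ i = (\<Sum>l<n. H $$ (i,l) * x $ l)" by (rule mv_index_sum[OF Hc x i])
      also have "\<dots> \<ge> 0" using Hnn Hc xnn i unfolding nonneg_mat_def by (intro sum_nonneg mult_nonneg_nonneg) auto
      finally show ?thesis .
    qed
    thus "0 < x $ i" using Hlt[OF i] by simp
  qed
  show ?thesis unfolding H_def[symmetric]
    by (rule rho_lt_1[OF Hc n Hnn x xpos]) (use Hlt in auto)
qed



theorem theorem5p13:
  fixes A :: "real mat" and m n p :: nat
    and U1 V1 U2 V2 E :: "nat \<Rightarrow> real mat"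
  assumes "A \<in> carrier_mat m n" and "0 < m" and "0 < n"
    and "nonneg_mat A" and "nonneg_mat (mp_inverse A)"
    and "proper_weak_regular_multisplitting A p U1 V1 E"
    and "proper_weak_regular_multisplitting A p U2 V2 E"
    and "\<forall>k < p. range_mat (E k) \<subseteq> range_mat (transpose_mat A)"
    and "\<forall>k < p. mat_ge (mp_inverse (U1 k)) (mp_inverse (U2 k))"
  shows "rho (multisplitting_iter n p U1 V1 E) \<le> rho (multisplitting_iter n p U2 V2 E)
     \<and> rho (multisplitting_iter n p U2 V2 E) < 1"
proof -
  note A = assms(1) and n = assms(3) and Ann = assms(4) and Ainn = assms(5)
    and ms1 = assms(6) and ms2 = assms(7) and rng = assms(8) and ge = assms(9)
  have spl1: "\<And>k. k < p \<Longrightarrow> proper_weak_regular_splitting A (U1 k) (V1 k)"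
    and spl2: "\<And>k. k < p \<Longrightarrow> proper_weak_regular_splitting A (U2 k) (V2 k)"
    and E: "\<And>k. k < p \<Longrightarrow> E k \<in> carrier_mat n n \<and> diagonal_mat (E k) \<and> nonneg_mat (E k)"
    and sumE: "mat_sum n n E p = 1\<^sub>m n"
    using ms1 ms2 A unfolding proper_weak_regular_multisplitting_def by auto
  have Ec: "\<forall>k<p. E k \<in> carrier_mat n n" using E by auto
  have Ainj: "\<And>w. w \<in> carrier_vec n \<Longrightarrow> A *\<^sub>v w = 0\<^sub>v m \<Longrightarrow> w = 0\<^sub>v n"
    using A_inj[OF A Ec sumE rng] by blast
  have Ainj0: "\<forall>w\<in>carrier_vec n. A *\<^sub>v w = 0\<^sub>v m \<longrightarrow> w = 0\<^sub>v n" using Ainj by auto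
  define H1 where "H1 = multisplitting_iter n p U1 V1 E"
  define H2 where "H2 = multisplitting_iter n p U2 V2 E"
  note hf1 = ms_facts[OF A Ainj0 ms1, folded H1_def]
  note hf2 = ms_facts[OF A Ainj0 ms2, folded H2_def]
  have UVent: "(mp_inverse U * V) $$ (i,j) = (if i = j then 1 else 0) - (\<Sum>l<m. mp_inverse U $$ (i,l) * A $$ (l,j))"
    if spl: "proper_weak_regular_splitting A U (V)" and ij: "i < n" "j < n" for U V i j
  proof -
    have Uic: "mp_inverse U \<in> carrier_mat n m" using splitting_facts(3)[OF A Ainj spl] .
    have "(mp_inverse U * V) $$ (i,j) = (1\<^sub>m n - mp_inverse U * A) $$ (i,j)"
      using splitting_facts(4)[OF A Ainj spl] by simp
    also have "\<dots> = (if i = j then 1 else 0) - (mp_inverse U * A) $$ (i,j)"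
      using Uic A ij by simp
    also have "(mp_inverse U * A) $$ (i,j) = (\<Sum>l<m. mp_inverse U $$ (i,l) * A $$ (l,j))"
      by (rule mult_index_sum[OF Uic A ij])
    finally show ?thesis .
  qed
  have le: "\<forall>i<n. \<forall>j<n. 0 \<le> H1 $$ (i,j) \<and> H1 $$ (i,j) \<le> H2 $$ (i,j)"
  proof (intro allI impI conjI)
    fix i j assume i: "i < n" and j: "j < n"
    show "0 \<le> H1 $$ (i,j)" unfolding hf1(2)[OF i j]
    proof (intro sum_nonneg mult_nonneg_nonneg)
      fix k assume "k \<in> {..<p}" hence k: "k < p" by auto
      show "0 \<le> E k $$ (i,i)" using E[OF k] i unfolding nonneg_mat_def by auto
      show "0 \<le> (mp_inverse (U1 k) * V1 k) $$ (i,j)"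
        using splitting_facts(8,3,2)[OF A Ainj spl1[OF k]] i j unfolding nonneg_mat_def by auto
    qed
    show "H1 $$ (i,j) \<le> H2 $$ (i,j)" unfolding hf1(2)[OF i j] hf2(2)[OF i j]
    proof (intro sum_mono mult_left_mono)
      fix k assume "k \<in> {..<p}" hence k: "k < p" by auto
      show "0 \<le> E k $$ (i,i)" using E[OF k] i unfolding nonneg_mat_def by auto
      have c1: "mp_inverse (U1 k) \<in> carrier_mat n m" using splitting_facts(3)[OF A Ainj spl1[OF k]] .
      have "(\<Sum>l<m. mp_inverse (U2 k) $$ (i,l) * A $$ (l,j)) \<le> (\<Sum>l<m. mp_inverse (U1 k) $$ (i,l) * A $$ (l,j))"
      proof (intro sum_mono mult_right_mono)
        fix l assume "l \<in> {..<m}" hence l: "l < m" by auto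
        show "mp_inverse (U2 k) $$ (i,l) \<le> mp_inverse (U1 k) $$ (i,l)"
          using ge k c1 i l unfolding mat_ge_def by auto
        show "0 \<le> A $$ (l,j)" using Ann A l j unfolding nonneg_mat_def by auto
      qed
      thus "(mp_inverse (U1 k) * V1 k) $$ (i,j) \<le> (mp_inverse (U2 k) * V2 k) $$ (i,j)"
        unfolding UVent[OF spl1[OF k] i j] UVent[OF spl2[OF k] i j] by simp
    qed
  qed
  have part1: "rho H1 \<le> rho H2" by (rule rho_mono[OF hf1(1) hf2(1) n le])
  have part2: "rho H2 < 1" unfolding H2_def by (rule ms_rho_lt_1[OF A n Ainj Ainn ms2])
  show ?thesis using part1 part2 unfolding H1_def H2_def by simp
qed


end
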